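(* For every prime power $q$ and integer $n\geq 2$, the design of points and hyperplanes of $\mathrm{PG}(n,q)$ is additive under $\mathrm{EA}(q^{n+1})$. In particular, the desarguesian projective plane of order $q$ is additive under $\mathrm{EA}(q^3)$.
   Context: $\mathrm{PG}(n,q)$ is the $n$-dimensional projective geometry over the finite field $\mathbb{F}_q$; its point-hyperplane design has the points of $\mathrm{PG}(n,q)$ as points and the hyperplanes (as sets of points) as blocks. $\mathrm{EA}(q^{n+1})$ denotes the elementary abelian group of order $q^{n+1}$. A design $(V,\mathscr B)$ is additive under an abelian group $G$ if there is an injective map $f:V\to G$ such that $\sum_{x\in B}f(x)=0$ for every block $B\in\mathscr B$. *)

theory Defs
  imports "HOL-Computational_Algebra.Primes"
begin

text \<open>Vectors of F_q^(n+1), represented as functions nat => 'a supported on {0..n}.\<close>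
definition pg_vecs :: "nat \<Rightarrow> (nat \<Rightarrow> 'a::field) set" where
  "pg_vecs n = {v. \<forall>i>n. v i = 0}"

definition span1 :: "(nat \<Rightarrow> 'a::field) \<Rightarrow> (nat \<Rightarrow> 'a) set" where
  "span1 v = {(\<lambda>i. c * v i) | c. True}"

definition pg_points :: "nat \<Rightarrow> (nat \<Rightarrow> 'a::field) set set" where
  "pg_points n = {span1 v | v. v \<in> pg_vecs n \<and> v \<noteq> (\<lambda>i. 0)}"

definition pg_hyperplane :: "nat \<Rightarrow> (nat \<Rightarrow> 'a::field) \<Rightarrow> (nat \<Rightarrow> 'a) set set" where
  "pg_hyperplane n a = {P \<in> pg_points n. \<forall>w\<in>P. (\<Sum>i\<le>n. a i * w i) = 0}"

definition pg_hyperplanes :: "nat \<Rightarrow> (nat \<Rightarrow> 'a::field) set set set" where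
  "pg_hyperplanes n = {pg_hyperplane n a | a. a \<in> pg_vecs n \<and> a \<noteq> (\<lambda>i. 0)}"

definition additive_under :: "'v set \<Rightarrow> 'v set set \<Rightarrow> 'g::ab_group_add itself \<Rightarrow> bool" where
  "additive_under V Bs _ \<longleftrightarrow> (\<exists>f :: 'v \<Rightarrow> 'g. inj_on f V \<and> (\<forall>B\<in>Bs. (\<Sum>x\<in>B. f x) = 0))"

definition elementary_abelian :: "'g::ab_group_add itself \<Rightarrow> bool" where
  "elementary_abelian _ \<longleftrightarrow> (\<exists>p::nat. prime p \<and> (\<forall>x::'g. (\<Sum>i<p. x) = 0))"

end

theory Submission
  imports Defs "HOL-Algebra.Algebraic_Closure_Type"
begin

definition mulN :: "nat \<Rightarrow> 'v::ab_group_add \<Rightarrow> 'v" where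
  "mulN a y = (\<Sum>i<a. y)"

lemma mulN_0[simp]: "mulN 0 y = 0" by (simp add: mulN_def)
lemma mulN_Suc: "mulN (Suc a) y = mulN a y + y" by (simp add: mulN_def)
lemma mulN_add: "mulN (a + b) y = mulN a y + mulN b y"
  by (induction b) (simp_all add: mulN_Suc add.assoc)
lemma mulN_mult: "mulN (a * b) y = mulN a (mulN b y)"
  by (induction a) (simp_all add: mulN_Suc mulN_add add.commute)
lemma mulN_plus: "mulN a (y + z) = mulN a y + mulN a z"
  by (induction a) (simp_all add: mulN_Suc algebra_simps)
lemma mulN_zero_right[simp]: "mulN a 0 = 0" by (simp add: mulN_def)
lemma mulN_sum: "mulN a (\<Sum>i\<in>I. f i) = (\<Sum>i\<in>I. mulN a (f i))"
  by (induction I rule: infinite_finite_induct) (simp_all add: mulN_plus)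
lemma mulN_mod:
  assumes "mulN p y = 0"
  shows "mulN a y = mulN (a mod p) y"
proof -
  have "a = (a div p) * p + a mod p" by simp
  hence "mulN a y = mulN ((a div p) * p) y + mulN (a mod p) y"
    using mulN_add[of "(a div p) * p" "a mod p" y] by simp
  also have "mulN ((a div p) * p) y = 0" by (simp add: mulN_mult assms)
  finally show ?thesis by simp
qed
lemma mulN_ring: "mulN a (y::'r::ring_1) = of_nat a * y"
  by (simp add: mulN_def)

lemma mulN_closed:
  assumes "0 \<in> S" "\<And>x y. x \<in> S \<Longrightarrow> y \<in> S \<Longrightarrow> x + y \<in> S" "y \<in> S"
  shows "mulN a y \<in> S"
  by (induction a) (simp_all add: mulN_Suc assms)

lemma sum_closed:
  assumes "0 \<in> S" "\<And>x y. x \<in> S \<Longrightarrow> y \<in> S \<Longrightarrow> x + y \<in> S" "\<And>i. i \<in> I \<Longrightarrow> f i \<in> S"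
  shows "(\<Sum>i\<in>I. f i) \<in> S"
  using assms(3)
proof (induction I rule: infinite_finite_induct)
  case (insert x F) then show ?case by (simp add: assms(2))
qed (simp_all add: assms(1))

definition Dset :: "'s::zero set \<Rightarrow> nat \<Rightarrow> (nat \<Rightarrow> 's) set" where
  "Dset A m = {c. \<forall>i. (i < m \<longrightarrow> c i \<in> A) \<and> (m \<le> i \<longrightarrow> c i = 0)}"

lemma card_Dset:
  fixes A :: "'s::zero set"
  assumes "finite A"
  shows "card (Dset A m) = card A ^ m"
proof -
  define E where "E = (\<lambda>(f::nat \<Rightarrow> 's) i. if i < m then f i else 0)"
  have inj: "inj_on E (PiE {..<m} (\<lambda>_. A))"
  proof (rule inj_onI)
    fix f g assume f: "f \<in> PiE {..<m} (\<lambda>_. A)" and g: "g \<in> PiE {..<m} (\<lambda>_. A)" and eq: "E f = E g"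
    show "f = g"
    proof (rule PiE_ext[OF f g])
      fix i assume "i \<in> {..<m}"
      thus "f i = g i" using fun_cong[OF eq, of i] by (simp add: E_def)
    qed
  qed
  have img: "E ` PiE {..<m} (\<lambda>_. A) = Dset A m"
  proof
    show "E ` PiE {..<m} (\<lambda>_. A) \<subseteq> Dset A m"
    proof (rule image_subsetI)
      fix f assume f: "f \<in> PiE {..<m} (\<lambda>_. A)"
      show "E f \<in> Dset A m"
        unfolding Dset_def E_def using f by (auto dest: PiE_mem)
    qed
    show "Dset A m \<subseteq> E ` PiE {..<m} (\<lambda>_. A)"
    proof
      fix c assume c: "c \<in> Dset A m"
      have "c = E (restrict c {..<m})"
        using c unfolding E_def Dset_def by (auto simp: fun_eq_iff)
      moreover have "restrict c {..<m} \<in> PiE {..<m} (\<lambda>_. A)"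
        using c by (intro restrict_PiE_iff[THEN iffD2]) (simp add: Dset_def)
      ultimately show "c \<in> E ` PiE {..<m} (\<lambda>_. A)" by blast
    qed
  qed
  have "card (Dset A m) = card (PiE {..<m} (\<lambda>_. A))"
    using card_image[OF inj] img by simp
  also have "\<dots> = card A ^ m" by (simp add: card_PiE assms)
  finally show ?thesis .
qed


lemma greedy_basis:
  fixes S :: "'v set" and D :: "nat \<Rightarrow> 'c set" and L :: "'v list \<Rightarrow> 'c \<Rightarrow> 'v"
  assumes fin: "finite S" and cardD: "\<And>m. card (D m) = k ^ m" and k: "k \<ge> 2"
    and H0: "\<And>bs. set bs \<subseteq> S \<Longrightarrow> L bs ` D (length bs) \<subseteq> S"
    and Hnil: "inj_on (L []) (D 0)"
    and H: "\<And>bs x. set bs \<subseteq> S \<Longrightarrow> inj_on (L bs) (D (length bs)) \<Longrightarrow> x \<in> S \<Longrightarrow>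
              x \<notin> L bs ` D (length bs) \<Longrightarrow> inj_on (L (bs @ [x])) (D (Suc (length bs)))"
  shows "\<exists>bs. set bs \<subseteq> S \<and> bij_betw (L bs) (D (length bs)) S"
proof -
  define M where "M = {m. \<exists>bs. set bs \<subseteq> S \<and> length bs = m \<and> inj_on (L bs) (D m)}"
  have bnd: "m \<le> card S" if mM: "m \<in> M" for m
  proof -
    obtain bs where bs: "set bs \<subseteq> S" "length bs = m" "inj_on (L bs) (D m)"
      using mM unfolding M_def by blast
    have "card (D m) = card (L bs ` D m)" using bs(3) by (simp add: card_image)
    also have "\<dots> \<le> card S" using H0[OF bs(1)] bs(2) fin by (simp add: card_mono)
    finally have "k ^ m \<le> card S" by (simp add: cardD)
    moreover have "m < k ^ m"
    proof -
      have "m < 2 ^ m" by (rule less_exp)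
      also have "(2::nat) ^ m \<le> k ^ m" using k by (rule power_mono) simp
      finally show ?thesis .
    qed
    ultimately show ?thesis by simp
  qed
  have "0 \<in> M" using Hnil by (auto simp: M_def)
  define m where "m = Max M"
  have finM: "finite M" using bnd finite_nat_set_iff_bounded_le by blast
  have "m \<in> M" using finM \<open>0 \<in> M\<close> unfolding m_def by (intro Max_in) auto
  then obtain bs where bs: "set bs \<subseteq> S" "length bs = m" "inj_on (L bs) (D m)"
    by (auto simp: M_def)
  have "L bs ` D m = S"
  proof (rule ccontr)
    assume "L bs ` D m \<noteq> S"
    then obtain x where x: "x \<in> S" "x \<notin> L bs ` D m" using H0[OF bs(1)] bs(2) by auto
    have "inj_on (L (bs @ [x])) (D (Suc m))" using H[OF bs(1) _ x(1)] bs x by simp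
    hence "Suc m \<in> M" using bs x by (auto simp: M_def intro!: exI[of _ "bs @ [x]"])
    hence "Suc m \<le> m" using finM by (simp add: m_def)
    thus False by simp
  qed
  thus ?thesis using bs by (auto simp: bij_betw_def)
qed

definition Lp :: "'v::ab_group_add list \<Rightarrow> (nat \<Rightarrow> nat) \<Rightarrow> 'v" where
  "Lp bs c = (\<Sum>i<length bs. mulN (c i) (bs ! i))"

lemma Lp_add: "Lp bs c + Lp bs d = Lp bs (\<lambda>i. c i + d i)"
  by (simp add: Lp_def mulN_add sum.distrib)

lemma Lp_mulN: "mulN a (Lp bs c) = Lp bs (\<lambda>i. a * c i)"
  by (simp add: Lp_def mulN_sum mulN_mult)

lemma Lp_cong: "(\<And>i. i < length bs \<Longrightarrow> c i = d i) \<Longrightarrow> Lp bs c = Lp bs d"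
  by (simp add: Lp_def)

lemma Lp_mod:
  assumes "\<And>y. y \<in> set bs \<Longrightarrow> mulN p y = 0"
  shows "Lp bs c = Lp bs (\<lambda>i. if i < length bs then c i mod p else 0)"
  unfolding Lp_def
  by (rule sum.cong) (auto intro!: mulN_mod assms)

lemma Lp_snoc: "Lp (bs @ [x]) c = Lp bs c + mulN (c (length bs)) x"
  by (simp add: Lp_def nth_append)

lemma Dset_zero: "Dset A 0 = {\<lambda>_. 0}"
  by (auto simp: Dset_def)

lemma Fp_basis:
  fixes S :: "'v::ab_group_add set"
  assumes p: "Factorial_Ring.prime p" and fin: "finite S" and S0: "0 \<in> S"
    and Sadd: "\<And>x y. x \<in> S \<Longrightarrow> y \<in> S \<Longrightarrow> x + y \<in> S"
    and Sp: "\<And>x. x \<in> S \<Longrightarrow> mulN p x = 0"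
  shows "\<exists>bs. set bs \<subseteq> S \<and> bij_betw (Lp bs) (Dset {..<p} (length bs)) S"
proof (rule greedy_basis[where k = p])
  show "finite S" by fact
  show "card (Dset {..<p} m) = p ^ m" for m by (simp add: card_Dset)
  show "2 \<le> p" using p by (simp add: prime_ge_2_nat)
  show "Lp bs ` Dset {..<p} (length bs) \<subseteq> S" if "set bs \<subseteq> S" for bs
    using that unfolding Lp_def
    by (auto intro!: sum_closed[OF S0 Sadd] mulN_closed[OF S0 Sadd])
  show "inj_on (Lp []) (Dset {..<p} 0)" by (simp add: Dset_zero)
next
  fix bs :: "'v list" and x
  assume bsS: "set bs \<subseteq> S" and inj: "inj_on (Lp bs) (Dset {..<p} (length bs))"
    and xS: "x \<in> S" and xn: "x \<notin> Lp bs ` Dset {..<p} (length bs)"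
  define m where "m = length bs"
  have p1: "p > 1" using p prime_gt_1_nat by blast
  have key: False if c: "c \<in> Dset {..<p} (Suc m)" and d: "d \<in> Dset {..<p} (Suc m)"
      and lt: "d m < c m" and eq: "Lp (bs @ [x]) c = Lp (bs @ [x]) d" for c d
  proof -
    define e where "e = c m - d m"
    have e0: "0 < e" "e < p" using lt c by (auto simp: e_def Dset_def)
    have "mulN (c m) x = mulN e x + mulN (d m) x"
      using lt by (simp add: e_def flip: mulN_add)
    hence eq2: "Lp bs c + mulN e x = Lp bs d"
      using eq by (simp add: Lp_snoc m_def add.assoc)
    have LS: "Lp bs c \<in> S"
      unfolding Lp_def using bsS
      by (auto intro!: sum_closed[OF S0 Sadd] mulN_closed[OF S0 Sadd])
    have negc: "- Lp bs c = mulN (p - 1) (Lp bs c)"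
    proof -
      have "mulN (p - 1) (Lp bs c) + Lp bs c = mulN p (Lp bs c)"
        using mulN_Suc[of "p - 1" "Lp bs c"] p1 by simp
      also have "\<dots> = 0" using Sp[OF LS] .
      finally show ?thesis by (simp add: neg_eq_iff_add_eq_0 add.commute)
    qed
    have "mulN e x = Lp bs d - Lp bs c"
      using eq2 by (metis add_diff_cancel_left')
    also have "\<dots> = Lp bs d + mulN (p - 1) (Lp bs c)"
      by (simp only: diff_conv_add_uminus negc)
    also have "\<dots> = Lp bs (\<lambda>i. d i + (p - 1) * c i)"
      by (simp add: Lp_mulN Lp_add)
    finally have me: "mulN e x = Lp bs (\<lambda>i. d i + (p - 1) * c i)" .
    have "coprime e p"
    proof -
      have "\<not> p dvd e" using e0 by (auto dest: dvd_imp_le)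
      hence "coprime p e" using p by (simp add: prime_imp_coprime)
      thus ?thesis by (simp add: coprime_commute)
    qed
    then obtain u y where uy: "e * u = p * y + 1"
      using bezout_nat[of e p] e0 by auto
    have "(u * e) mod p = 1"
    proof -
      have "u * e = 1 + y * p" using uy by (metis add.commute mult.commute)
      hence "(u * e) mod p = 1 mod p" by (simp only: mod_mult_self1)
      thus ?thesis using p1 by simp
    qed
    hence "x = mulN ((u * e) mod p) x" by (simp add: mulN_def)
    also have "\<dots> = mulN (u * e) x" using mulN_mod[OF Sp[OF xS]] by simp
    also have "\<dots> = mulN u (mulN e x)" by (simp add: mulN_mult)
    also have "\<dots> = Lp bs (\<lambda>i. u * (d i + (p - 1) * c i))" by (simp add: me Lp_mulN)
    also have "\<dots> = Lp bs (\<lambda>i. if i < length bs then (u * (d i + (p - 1) * c i)) mod p else 0)"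
      using bsS Sp by (intro Lp_mod) auto
    finally have "x \<in> Lp bs ` Dset {..<p} (length bs)"
      using p1 by (auto simp: Dset_def intro!: imageI)
    thus False using xn by simp
  qed
  show "inj_on (Lp (bs @ [x])) (Dset {..<p} (Suc (length bs)))"
  proof (rule inj_onI)
    fix c d assume c: "c \<in> Dset {..<p} (Suc (length bs))" and d: "d \<in> Dset {..<p} (Suc (length bs))"
      and eq: "Lp (bs @ [x]) c = Lp (bs @ [x]) d"
    consider "c m = d m" | "d m < c m" | "c m < d m" by linarith
    thus "c = d"
    proof cases
      case 1
      define c0 where "c0 = c(m := 0)"
      define d0 where "d0 = d(m := 0)"
      have c0: "c0 \<in> Dset {..<p} m" using c by (auto simp: Dset_def c0_def m_def)
      have d0: "d0 \<in> Dset {..<p} m" using d by (auto simp: Dset_def d0_def m_def)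
      have "Lp bs c0 = Lp bs c" "Lp bs d0 = Lp bs d"
        by (auto intro!: Lp_cong simp: c0_def d0_def m_def)
      hence "Lp bs c0 = Lp bs d0" using eq 1 by (simp add: Lp_snoc m_def)
      hence "c0 = d0" using inj c0 d0 by (auto simp: m_def dest: inj_onD)
      thus ?thesis using 1 by (auto simp: fun_eq_iff c0_def d0_def split: if_splits)
    next
      case 2 thus ?thesis using key[OF c[folded m_def] d[folded m_def] _ eq] by simp
    next
      case 3 thus ?thesis using key[OF d[folded m_def] c[folded m_def] _ eq[symmetric]] by simp
    qed
  qed
qed


definition La :: "'a::field alg_closure list \<Rightarrow> (nat \<Rightarrow> 'a) \<Rightarrow> 'a alg_closure" where
  "La bs c = (\<Sum>i<length bs. to_ac (c i) * bs ! i)"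

lemma La_cong: "(\<And>i. i < length bs \<Longrightarrow> c i = d i) \<Longrightarrow> La bs c = La bs d"
  by (simp add: La_def)

lemma La_snoc: "La (bs @ [x]) c = La bs c + to_ac (c (length bs)) * x"
  by (simp add: La_def nth_append)

lemma La_lin: "La bs (\<lambda>i. a * c i + b * d i) = to_ac a * La bs c + to_ac b * La bs d"
  by (simp add: La_def sum.distrib sum_distrib_left algebra_simps)

lemma Fa_basis:
  fixes S :: "'a::{finite,field} alg_closure set"
  assumes fin: "finite S" and S0: "0 \<in> S"
    and Sadd: "\<And>x y. x \<in> S \<Longrightarrow> y \<in> S \<Longrightarrow> x + y \<in> S"
    and Smul: "\<And>c x. x \<in> S \<Longrightarrow> to_ac c * x \<in> S"
  shows "\<exists>bs. set bs \<subseteq> S \<and> bij_betw (La bs) (Dset (UNIV::'a set) (length bs)) S"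
proof (rule greedy_basis[where k = "card (UNIV :: 'a set)"])
  show "finite S" by fact
  show "card (Dset (UNIV::'a set) m) = card (UNIV::'a set) ^ m" for m by (simp add: card_Dset)
  have "card {0::'a, 1} \<le> card (UNIV::'a set)" by (rule card_mono) auto
  thus "2 \<le> card (UNIV::'a set)" by simp
  show "La bs ` Dset UNIV (length bs) \<subseteq> S" if "set bs \<subseteq> S" for bs
    using that unfolding La_def
    by (auto intro!: sum_closed[OF S0 Sadd] Smul)
  show "inj_on (La []) (Dset UNIV 0)" by (simp add: Dset_zero)
next
  fix bs :: "'a alg_closure list" and x
  assume bsS: "set bs \<subseteq> S" and inj: "inj_on (La bs) (Dset UNIV (length bs))"
    and xS: "x \<in> S" and xn: "x \<notin> La bs ` Dset UNIV (length bs)"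
  define m where "m = length bs"
  have key: False if c: "c \<in> Dset UNIV (Suc m)" and d: "d \<in> Dset UNIV (Suc m)"
      and ne: "c m \<noteq> d m" and eq: "La (bs @ [x]) c = La (bs @ [x]) d" for c d
  proof -
    define e where "e = c m - d m"
    have e0: "e \<noteq> 0" using ne by (simp add: e_def)
    have "La bs c + to_ac (c m) * x = La bs d + to_ac (d m) * x"
      using eq by (simp add: La_snoc m_def)
    hence "to_ac e * x = La bs d - La bs c"
      by (simp add: e_def algebra_simps)
    hence "x = to_ac (1 / e) * (La bs d - La bs c)"
      using e0 by (simp add: field_simps)
    also have "\<dots> = La bs (\<lambda>i. (1/e) * d i + (- (1/e)) * c i)"
      by (subst La_lin) (simp add: algebra_simps)
    also have "\<dots> = La bs (\<lambda>i. if i < length bs then (1/e) * d i + (- (1/e)) * c i else 0)"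
      by (rule La_cong) simp
    finally have "x \<in> La bs ` Dset UNIV (length bs)"
      by (auto simp: Dset_def intro!: imageI)
    thus False using xn by simp
  qed
  show "inj_on (La (bs @ [x])) (Dset UNIV (Suc (length bs)))"
  proof (rule inj_onI)
    fix c d assume c: "c \<in> Dset UNIV (Suc (length bs))" and d: "d \<in> Dset UNIV (Suc (length bs))"
      and eq: "La (bs @ [x]) c = La (bs @ [x]) d"
    have 1: "c m = d m" using key[OF c[folded m_def] d[folded m_def] _ eq] by blast
    define c0 where "c0 = c(m := 0)"
    define d0 where "d0 = d(m := 0)"
    have c0: "c0 \<in> Dset UNIV m" using c by (auto simp: Dset_def c0_def m_def)
    have d0: "d0 \<in> Dset UNIV m" using d by (auto simp: Dset_def d0_def m_def)
    have "La bs c0 = La bs c" "La bs d0 = La bs d"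
      by (auto intro!: La_cong simp: c0_def d0_def m_def)
    hence "La bs c0 = La bs d0" using eq 1 by (simp add: La_snoc m_def)
    hence "c0 = d0" using inj c0 d0 by (auto simp: m_def dest: inj_onD)
    thus "c = d" using 1 by (auto simp: fun_eq_iff c0_def d0_def split: if_splits)
  qed
qed


lemma ff_pow_card:
  fixes x :: "'a::{finite,field}"
  shows "x ^ card (UNIV::'a set) = x"
proof (cases "x = 0")
  case False
  have "x * (\<Prod>y\<in>UNIV-{0}. x * y) = x * x ^ (card (UNIV :: 'a set) - 1) * \<Prod>(UNIV-{0})"
    by (simp add: prod.distrib mult_ac)
  also have "x * x ^ (card (UNIV :: 'a set) - 1) = x ^ Suc (card (UNIV :: 'a set) - 1)"
    by (subst power_Suc) auto
  also have "Suc (card (UNIV :: 'a set) - 1) = card (UNIV :: 'a set)"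
    using finite_UNIV_card_ge_0[where ?'a = 'a] by simp
  also have "(\<Prod>y\<in>UNIV-{0}. x * y) = (\<Prod>y\<in>UNIV-{0}. y)"
    by (rule prod.reindex_bij_witness[of _ "\<lambda>y. y / x" "\<lambda>y. x * y"]) (use False in auto)
  finally show ?thesis
    by simp
qed (use finite_UNIV_card_ge_0[where ?'a = 'a] in auto)

lemma ff_card_ge2: "card (UNIV::'a::{finite,field} set) \<ge> 2"
proof -
  have "card {0::'a, 1} \<le> card (UNIV::'a set)" by (rule card_mono) auto
  thus ?thesis by simp
qed

lemma ff_CHAR_prime: "Factorial_Ring.prime CHAR('a::{finite,field})"
  using prime_CHAR_semidom finite_imp_CHAR_pos[OF finite_UNIV] by blast

lemma ff_card_CHAR_pow:
  "\<exists>k. k \<ge> 1 \<and> card (UNIV::'a::{finite,field} set) = CHAR('a) ^ k"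
proof -
  have "\<exists>bs. set bs \<subseteq> (UNIV::'a set) \<and> bij_betw (Lp bs) (Dset {..<CHAR('a)} (length bs)) UNIV"
    by (rule Fp_basis) (auto simp: ff_CHAR_prime mulN_ring)
  then obtain bs :: "'a list" where "bij_betw (Lp bs) (Dset {..<CHAR('a)} (length bs)) UNIV" by blast
  hence "card (UNIV::'a set) = CHAR('a) ^ length bs"
    by (metis bij_betw_same_card card_Dset card_lessThan finite_lessThan)
  moreover have "length bs \<ge> 1"
  proof (rule ccontr)
    assume "\<not> length bs \<ge> 1"
    hence "length bs = 0" by linarith
    thus False using calculation ff_card_ge2[where 'a='a] by simp
  qed
  ultimately show ?thesis by blast
qed

lemma ff_of_nat_card: "of_nat (card (UNIV::'a::{finite,field} set)) = (0::'b::{semiring_1})" if "CHAR('b) = CHAR('a)"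
proof -
  obtain k where k: "k \<ge> 1" "card (UNIV::'a set) = CHAR('a) ^ k" using ff_card_CHAR_pow by blast
  have "CHAR('b) dvd card (UNIV::'a set)" using k that by (simp add: dvd_power)
  thus ?thesis by (simp add: of_nat_eq_0_iff_char_dvd)
qed

lemma ff_power_sum_low:
  fixes i :: nat
  assumes "i < card (UNIV::'a::{finite,field} set) - 1"
  shows "(\<Sum>c::'a\<in>UNIV. c ^ i) = 0"
proof (cases "i = 0")
  case True
  thus ?thesis using ff_of_nat_card[where 'a='a and 'b='a] by simp
next
  case False
  define P :: "'a poly" where "P = monom 1 i - 1"
  have polyP: "poly P x = x ^ i - 1" for x by (simp add: P_def poly_monom)
  have "P \<noteq> 0" using polyP[of 0] False by (auto simp: power_0_left)
  hence "card {x. poly P x = 0} \<le> degree P" by (rule card_poly_roots_bound)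
  also have "degree P \<le> i" unfolding P_def
    by (metis degree_diff_le degree_monom_le degree_1 le0)
  finally have cr: "card {x. poly P x = 0} \<le> i" .
  have "\<exists>a. a \<in> UNIV - {0} \<and> a \<notin> {x. poly P x = 0}"
  proof (rule ccontr)
    assume "\<not> ?thesis"
    hence "UNIV - {0::'a} \<subseteq> {x. poly P x = 0}" by auto
    hence "card (UNIV - {0::'a}) \<le> card {x. poly P x = 0}" by (intro card_mono) auto
    thus False using cr assms by (simp add: card_Diff_singleton)
  qed
  then obtain a :: 'a where a: "a \<noteq> 0" "a ^ i \<noteq> 1" by (auto simp: polyP)
  have "(\<Sum>c::'a\<in>UNIV. c ^ i) = (\<Sum>c::'a\<in>UNIV. (a * c) ^ i)"
    by (rule sum.reindex_bij_witness[of _ "\<lambda>y. a * y" "\<lambda>y. y / a"]) (use a in auto)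
  also have "\<dots> = a ^ i * (\<Sum>c::'a\<in>UNIV. c ^ i)"
    by (simp add: power_mult_distrib sum_distrib_left)
  finally have "(a ^ i - 1) * (\<Sum>c::'a\<in>UNIV. c ^ i) = 0" by (simp add: algebra_simps)
  thus ?thesis using a by simp
qed

lemma ff_pow_card_minus1:
  fixes c :: "'a::{finite,field}"
  assumes "c \<noteq> 0"
  shows "c ^ (card (UNIV::'a set) - 1) = 1"
proof -
  have "c * c ^ (card (UNIV::'a set) - 1) = c ^ card (UNIV::'a set)"
  proof -
    have q: "Suc (card (UNIV::'a set) - 1) = card (UNIV::'a set)" using ff_card_ge2[where 'a='a] by simp
    show ?thesis using power_Suc[of c "card (UNIV::'a set) - 1"] q by simp
  qed
  also have "\<dots> = c * 1" by (simp add: ff_pow_card)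
  finally show ?thesis using assms by simp
qed

lemma ff_power_sum_top:
  "(\<Sum>c::'a::{finite,field}\<in>UNIV. c ^ (card (UNIV::'a set) - 1)) = -1"
proof -
  have q2: "card (UNIV::'a set) \<ge> 2" by (rule ff_card_ge2)
  have "(\<Sum>c::'a\<in>UNIV. c ^ (card (UNIV::'a set) - 1)) = (\<Sum>c::'a\<in>UNIV. if c = 0 then 0 else 1)"
  proof (rule sum.cong[OF refl])
    fix c :: 'a
    show "c ^ (card (UNIV::'a set) - 1) = (if c = 0 then 0 else 1)"
    proof (cases "c = 0")
      case True thus ?thesis using q2 by (simp add: power_0_left)
    next
      case False thus ?thesis using ff_pow_card_minus1[OF False] by simp
    qed
  qed
  also have "\<dots> = of_nat (card (UNIV - {0::'a}))"
    by (simp add: sum.If_cases Compl_eq_Diff_UNIV)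
  also have "\<dots> = of_nat (card (UNIV::'a set) - 1)" by (simp add: card_Diff_singleton)
  also have "\<dots> = of_nat (card (UNIV::'a set)) - 1" using q2 by (simp add: of_nat_diff)
  also have "\<dots> = -1" using ff_of_nat_card[where 'a='a and 'b='a] by simp
  finally show ?thesis .
qed

lemma ff_power_sum_top':
  "(\<Sum>c::'a::{finite,field}\<in>UNIV. c ^ (card (UNIV::'a set) - Suc 0)) = -1"
  using ff_power_sum_top[where 'a='a] by simp


lemma line_power_sum:
  fixes y z :: "'a::{finite,field} alg_closure"
  shows "(\<Sum>c::'a\<in>UNIV. (y + to_ac c * z) ^ (card (UNIV::'a set) - 1)) = - (z ^ (card (UNIV::'a set) - 1))"
proof -
  define N where "N = card (UNIV::'a set) - 1"
  have "(\<Sum>c::'a\<in>UNIV. (y + to_ac c * z) ^ N)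
      = (\<Sum>c::'a\<in>UNIV. \<Sum>k\<le>N. of_nat (N choose k) * (to_ac c * z) ^ k * y ^ (N - k))"
    by (intro sum.cong refl) (subst add.commute, rule binomial_ring)
  also have "\<dots> = (\<Sum>k\<le>N. \<Sum>c::'a\<in>UNIV. of_nat (N choose k) * z ^ k * y ^ (N - k) * to_ac (c ^ k))"
    by (subst sum.swap) (simp add: power_mult_distrib mult_ac)
  also have "\<dots> = (\<Sum>k\<le>N. of_nat (N choose k) * z ^ k * y ^ (N - k) * to_ac (\<Sum>c::'a\<in>UNIV. c ^ k))"
    by (simp add: to_ac_sum sum_distrib_left)
  also have "\<dots> = (\<Sum>k\<le>N. if k = N then - (z ^ N) else 0)"
  proof (rule sum.cong)
    fix k assume "k \<in> {..N}"
    thus "of_nat (N choose k) * z ^ k * y ^ (N - k) * to_ac (\<Sum>c::'a\<in>UNIV. c ^ k) = (if k = N then - (z ^ N) else 0)"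
      by (cases "k = N") (auto simp: N_def ff_power_sum_top ff_power_sum_top' ff_power_sum_low)
  qed simp
  also have "\<dots> = - (z ^ N)" by simp
  finally show ?thesis by (simp add: N_def)
qed


definition Kset :: "nat \<Rightarrow> 'a::field alg_closure set" where
  "Kset Q = {x. x ^ Q = x}"

lemma ff_pow_card_pow: "(c::'a::{finite,field}) ^ (card (UNIV::'a set) ^ j) = c"
  by (induction j) (simp_all add: power_mult ff_pow_card)

lemma K_to_ac: "to_ac (c::'a::{finite,field}) \<in> Kset (card (UNIV::'a set) ^ j)"
  by (simp add: Kset_def flip: to_ac_power add: ff_pow_card_pow)

lemma K_mult: "x \<in> Kset Q \<Longrightarrow> y \<in> Kset Q \<Longrightarrow> x * y \<in> Kset Q"
  by (simp add: Kset_def power_mult_distrib)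

lemma K_0: "Q > 0 \<Longrightarrow> 0 \<in> Kset Q"
  by (simp add: Kset_def)

lemma K_power: "x \<in> Kset Q \<Longrightarrow> x ^ i \<in> Kset Q"
  by (simp add: Kset_def flip: power_mult) (metis mult.commute power_mult)

lemma K_add:
  fixes x y :: "'a::{finite,field} alg_closure"
  assumes "x \<in> Kset (card (UNIV::'a set) ^ j)" "y \<in> Kset (card (UNIV::'a set) ^ j)"
  shows "x + y \<in> Kset (card (UNIV::'a set) ^ j)"
proof -
  obtain k where k: "card (UNIV::'a set) = CHAR('a) ^ k" using ff_card_CHAR_pow by blast
  have pr: "Factorial_Ring.prime CHAR('a alg_closure)" by (simp add: ff_CHAR_prime)
  have "card (UNIV::'a set) ^ j = CHAR('a alg_closure) ^ (k * j)" by (simp add: k power_mult)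
  hence "(x + y) ^ (card (UNIV::'a set) ^ j) = x ^ (card (UNIV::'a set) ^ j) + y ^ (card (UNIV::'a set) ^ j)"
    by (intro freshmans_dream'[OF pr])
  thus ?thesis using assms by (simp add: Kset_def)
qed

lemma card_K:
  assumes j: "j \<ge> 1"
  shows "card (Kset (card (UNIV::'a::{finite,field} set) ^ j) :: 'a alg_closure set) = card (UNIV::'a set) ^ j"
proof -
  define Q where "Q = card (UNIV::'a set) ^ j"
  have Q2: "Q \<ge> 2"
  proof -
    have "card (UNIV::'a set) ^ 1 \<le> card (UNIV::'a set) ^ j" using j ff_card_ge2[where 'a='a] by (intro power_increasing) auto
    thus ?thesis using ff_card_ge2[where 'a='a] by (simp add: Q_def)
  qed
  have ofQ: "of_nat Q = (0 :: 'a alg_closure)"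
    using ff_of_nat_card[where 'a='a and 'b="'a alg_closure"] j by (simp add: Q_def)
  define P :: "'a alg_closure poly" where "P = monom 1 Q - monom 1 1"
  have polyP: "poly P x = x ^ Q - x" for x by (simp add: P_def poly_monom)
  have cQ: "coeff P Q = 1" using Q2 by (simp add: P_def coeff_monom)
  hence P0: "P \<noteq> 0" by auto
  have "degree P \<le> Q" unfolding P_def
    by (rule degree_diff_le) (use Q2 in \<open>auto intro: order.trans[OF degree_monom_le]\<close>)
  moreover have "Q \<le> degree P" using cQ by (intro le_degree) simp
  ultimately have degP: "degree P = Q" by simp
  have dP: "pderiv P = -1"
    by (simp add: P_def pderiv_diff pderiv_monom ofQ)
  have ord: "order a P \<le> 1" for a
  proof (rule ccontr)
    assume "\<not> order a P \<le> 1"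
    hence "[:-a, 1:] ^ 2 dvd P" using order_divides[of a 2 P] P0 by simp
    then obtain R where R: "P = [:-a, 1:] ^ 2 * R" by (elim dvdE)
    have h1: "poly ([:-a, 1:] ^ 2) a = 0" by (simp only: poly_power) simp
    have e2: "[:-a, 1:] ^ 2 = [:-a, 1:] ^ Suc 1" by (simp only: numeral_2_eq_2 One_nat_def)
    have h2: "poly (pderiv ([:-a, 1:] ^ 2)) a = 0"
      by (simp only: e2 pderiv_power_Suc poly_mult poly_smult power_one_right) simp
    have "poly (pderiv P) a = 0"
      by (simp only: R pderiv_mult poly_add poly_mult h1 h2) simp
    thus False using dP by simp
  qed
  obtain A where A: "size A = degree P" "P = smult (lead_coeff P) (\<Prod>x\<in>#A. [:-x, 1:])"
    using alg_closed_imp_factorization[OF P0] by blast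
  have lc: "lead_coeff P \<noteq> 0" using P0 by simp
  have "proots P = proots (\<Prod>x\<in>#A. [:-x, 1:])"
    by (subst A(2)) (rule proots_smult[OF lc])
  also have "\<dots> = A"
  proof -
    have "(\<Prod>x\<in>#A. [:-x, 1:]) = (\<Prod>p\<in># image_mset (\<lambda>x. [:-x, 1:]) A. p)" by simp
    also have "proots \<dots> = (\<Sum>p\<in># image_mset (\<lambda>x. [:-x, 1:]) A. proots p)"
      by (rule proots_prod_mset) auto
    also have "\<dots> = (\<Sum>x\<in>#A. {#x#})" by (simp add: multiset.map_comp o_def)
    also have "\<dots> = A" by (induction A) auto
    finally show ?thesis .
  qed
  finally have prA: "proots P = A" .
  have cnt: "count A a = 1" if "a \<in># A" for a
    using ord[of a] that P0 prA by (metis count_proots count_eq_zero_iff le_antisym not_less_eq_eq Suc_leI neq0_conv One_nat_def)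
  have "size A = (\<Sum>a\<in>set_mset A. count A a)" by (simp add: size_multiset_overloaded_eq)
  also have "\<dots> = card (set_mset A)" using cnt by simp
  also have "set_mset A = Kset Q"
  proof -
    have "set_mset A = {x. poly P x = 0}" using set_count_proots[OF P0] prA by simp
    thus ?thesis by (simp add: Kset_def polyP)
  qed
  finally show ?thesis using A(1) degP by (simp add: Q_def)
qed


lemma pg_vecs_Dset: "pg_vecs n = Dset UNIV (Suc n)"
  by (auto simp: pg_vecs_def Dset_def Suc_le_eq)

lemma finite_pg_vecs: "finite (pg_vecs n :: (nat \<Rightarrow> 'a::{finite,field}) set)"
proof -
  have "card (Dset (UNIV::'a set) (Suc n)) = card (UNIV::'a set) ^ Suc n" by (simp add: card_Dset)
  also have "\<dots> > 0" using ff_card_ge2[where 'a='a] by simp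
  finally show ?thesis unfolding pg_vecs_Dset by (rule card_ge_0_finite)
qed

lemma split_sum:
  fixes V :: "(nat \<Rightarrow> 'a::{finite,field}) set" and w :: "nat \<Rightarrow> 'a"
    and H :: "(nat \<Rightarrow> 'a) \<Rightarrow> 'b::comm_monoid_add"
  assumes fin: "finite V" and wk: "w k = 1"
    and cl: "\<And>v c. v \<in> V \<Longrightarrow> (\<lambda>i. v i + c * w i) \<in> V"
  shows "(\<Sum>v\<in>V. H v) = (\<Sum>u\<in>{v\<in>V. v k = 0}. \<Sum>c\<in>UNIV. H (\<lambda>i. u i + c * w i))"
proof -
  define U where "U = {v\<in>V. v k = 0}"
  have "(\<Sum>u\<in>U. \<Sum>c\<in>UNIV. H (\<lambda>i. u i + c * w i)) = (\<Sum>(u, c)\<in>U \<times> UNIV. H (\<lambda>i. u i + c * w i))"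
    by (rule sum.cartesian_product)
  also have "\<dots> = (\<Sum>v\<in>V. H v)"
  proof (rule sum.reindex_bij_witness[where i = "\<lambda>v. (\<lambda>i. v i - v k * w i, v k)"
        and j = "\<lambda>(u, c). (\<lambda>i. u i + c * w i)"])
    fix uc assume uc: "uc \<in> U \<times> (UNIV::'a set)"
    obtain u c where [simp]: "uc = (u, c)" by (cases uc)
    have "u k = 0" using uc by (simp add: U_def)
    thus "(\<lambda>v. (\<lambda>i. v i - v k * w i, v k)) ((\<lambda>(u, c). (\<lambda>i. u i + c * w i)) uc) = uc"
      by (simp add: wk)
    show "(\<lambda>(u, c). (\<lambda>i. u i + c * w i)) uc \<in> V" using uc cl by (auto simp: U_def)
    show "H ((\<lambda>(u, c). (\<lambda>i. u i + c * w i)) uc) = (case uc of (u, c) \<Rightarrow> H (\<lambda>i. u i + c * w i))"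
      by simp
  next
    fix v assume v: "v \<in> V"
    show "(\<lambda>(u, c). (\<lambda>i. u i + c * w i)) ((\<lambda>v. (\<lambda>i. v i - v k * w i, v k)) v) = v"
      by simp
    have "(\<lambda>i. v i + (- v k) * w i) \<in> V" by (rule cl[OF v])
    hence "(\<lambda>i. v i - v k * w i) \<in> V" by (simp add: algebra_simps)
    thus "(\<lambda>v. (\<lambda>i. v i - v k * w i, v k)) v \<in> U \<times> UNIV"
      by (simp add: U_def wk)
  qed
  finally show ?thesis by (simp add: U_def)
qed

lemma La_lin1: "La bs (\<lambda>i. u i + c * w i) = La bs u + to_ac c * La bs w"
  using La_lin[of bs 1 u c w] by simp

lemma La_scale: "La bs (\<lambda>i. c * v i) = to_ac c * La bs v"
  by (simp add: La_def sum_distrib_left mult_ac)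

lemma La_zero: "La bs (\<lambda>i. 0) = 0"
  by (simp add: La_def)

lemma hyp_sum:
  fixes bs :: "'a::{finite,field} alg_closure list" and a :: "nat \<Rightarrow> 'a"
  assumes n: "n \<ge> 2" and aV: "a \<in> pg_vecs n" and a0: "a \<noteq> (\<lambda>i. 0)"
  shows "(\<Sum>v\<in>{v\<in>pg_vecs n. (\<Sum>i\<le>n. a i * v i) = 0}. La bs v ^ (card (UNIV::'a set) - 1)) = 0"
proof -
  define W where "W = {v\<in>pg_vecs n. (\<Sum>i\<le>n. a i * v i) = 0}"
  obtain j where aj: "a j \<noteq> 0" using a0 by auto
  have jn: "j \<le> n" using aV aj by (auto simp: pg_vecs_def not_le[symmetric])
  define k where "k = (if j = 0 then 1 else (0::nat))"
  define l where "l = (if j = 2 then 1 else (2::nat))"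
  have kl: "k \<noteq> j" "l \<noteq> j" "k \<noteq> l" "k \<le> n" "l \<le> n" using n by (auto simp: k_def l_def)
  define wv where "wv = (\<lambda>t i. if i = t then 1 else if i = j then - a t / a j else (0::'a))"
  have wv_in: "wv t \<in> W" if "t \<le> n" "t \<noteq> j" for t
  proof -
    have "wv t \<in> pg_vecs n" using that jn by (auto simp: pg_vecs_def wv_def)
    moreover have "(\<Sum>i\<le>n. a i * wv t i) = (\<Sum>i\<le>n. (if i = t then a t else 0) + (if i = j then - a t else 0))"
      using aj that by (intro sum.cong) (auto simp: wv_def)
    moreover have "\<dots> = 0" using that jn by (simp add: sum.distrib)
    ultimately show ?thesis by (simp add: W_def)
  qed
  have finW: "finite W" unfolding W_def by (rule finite_subset[OF _ finite_pg_vecs]) auto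
  have Wcl: "(\<lambda>i. v i + c * u i) \<in> W" if "v \<in> W" "u \<in> W" for v u c
  proof -
    have "(\<lambda>i. v i + c * u i) \<in> pg_vecs n" using that by (auto simp: W_def pg_vecs_def)
    moreover have "(\<Sum>i\<le>n. a i * (v i + c * u i)) = (\<Sum>i\<le>n. a i * v i) + c * (\<Sum>i\<le>n. a i * u i)"
      by (simp add: algebra_simps sum.distrib sum_distrib_left)
    ultimately show ?thesis using that by (simp add: W_def)
  qed
  define U where "U = {v\<in>W. v k = 0}"
  define U' where "U' = {v\<in>U. v l = 0}"
  have Ucl: "(\<lambda>i. v i + c * wv l i) \<in> U" if "v \<in> U" for v c
    using that Wcl[of v "wv l" c] wv_in[of l] kl by (auto simp: U_def wv_def)
  have finU: "finite U" using finW by (simp add: U_def)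
  have "card U = (\<Sum>u\<in>U. (1::nat))" by simp
  also have "\<dots> = (\<Sum>u\<in>U'. \<Sum>c\<in>(UNIV::'a set). (1::nat))"
    unfolding U'_def by (rule split_sum[OF finU _ Ucl]) (simp add: wv_def)
  also have "\<dots> = card U' * card (UNIV::'a set)" by simp
  finally have cU: "card U = card U' * card (UNIV::'a set)" .
  have ofU: "of_nat (card U) = (0::'a alg_closure)"
    using ff_of_nat_card[where 'a='a and 'b="'a alg_closure"] by (simp add: cU)
  define N where "N = card (UNIV::'a set) - 1"
  have "(\<Sum>v\<in>W. La bs v ^ N) = (\<Sum>u\<in>U. \<Sum>c\<in>(UNIV::'a set). La bs (\<lambda>i. u i + c * wv k i) ^ N)"
    unfolding U_def
  proof (rule split_sum[OF finW])
    show "wv k k = 1" by (simp add: wv_def)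
    have "wv k \<in> W" using wv_in kl by simp
    thus "\<And>v c. v \<in> W \<Longrightarrow> (\<lambda>i. v i + c * wv k i) \<in> W" using Wcl by blast
  qed
  also have "\<dots> = (\<Sum>u\<in>U. \<Sum>c\<in>(UNIV::'a set). (La bs u + to_ac c * La bs (wv k)) ^ N)"
    by (simp add: La_lin1)
  also have "\<dots> = (\<Sum>u\<in>U. - (La bs (wv k) ^ N))"
    unfolding N_def by (intro sum.cong refl line_power_sum)
  also have "\<dots> = - (of_nat (card U) * La bs (wv k) ^ N)" by (simp add: sum_negf)
  also have "\<dots> = 0" by (simp add: ofU)
  finally show ?thesis by (simp add: W_def N_def)
qed


lemma span1_mem: "v \<in> span1 v"
  unfolding span1_def by (auto intro!: exI[of _ 1])

lemma span1_iff: "w \<in> span1 v \<longleftrightarrow> (\<exists>c. w = (\<lambda>i. c * v i))"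
  unfolding span1_def by auto

lemma span1_scale:
  assumes "(c::'a::field) \<noteq> 0"
  shows "span1 (\<lambda>i. c * v i) = span1 v"
proof
  show "span1 (\<lambda>i. c * v i) \<subseteq> span1 v"
  proof
    fix w assume "w \<in> span1 (\<lambda>i. c * v i)"
    then obtain d where d: "w = (\<lambda>i. d * (c * v i))" by (auto simp: span1_iff)
    have "w = (\<lambda>i. (d * c) * v i)" by (simp add: d mult.assoc)
    thus "w \<in> span1 v" by (auto simp: span1_iff)
  qed
  show "span1 v \<subseteq> span1 (\<lambda>i. c * v i)"
  proof
    fix w assume "w \<in> span1 v"
    then obtain d where d: "w = (\<lambda>i. d * v i)" by (auto simp: span1_iff)
    have "w = (\<lambda>i. (d / c) * (c * v i))" using assms by (simp add: d)
    thus "w \<in> span1 (\<lambda>i. c * v i)" unfolding span1_iff by (rule exI)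
  qed
qed

lemma nonzero_vec_scale:
  fixes v :: "nat \<Rightarrow> 'a::field"
  assumes "v \<noteq> (\<lambda>i. 0)" "(\<lambda>i. c * v i) = (\<lambda>i. d * v i)"
  shows "c = d"
proof -
  obtain i where "v i \<noteq> 0" using assms(1) by auto
  moreover have "c * v i = d * v i" using assms(2) by (metis)
  ultimately show ?thesis by simp
qed

lemma roots_unity_in_base:
  fixes z :: "'a::{finite,field} alg_closure"
  assumes "z ^ (card (UNIV::'a set) - 1) = 1"
  shows "\<exists>c. c \<noteq> 0 \<and> z = to_ac c"
proof -
  define N where "N = card (UNIV::'a set) - 1"
  have N1: "N \<ge> 1" using ff_card_ge2[where 'a='a] by (simp add: N_def)
  define P :: "'a alg_closure poly" where "P = monom 1 N - 1"
  have polyP: "poly P x = x ^ N - 1" for x by (simp add: P_def poly_monom)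
  have P0: "P \<noteq> 0" using polyP[of 0] N1 by (auto simp: power_0_left)
  define R where "R = {x. poly P x = 0}"
  have finR: "finite R" unfolding R_def by (rule poly_roots_finite[OF P0])
  have "card R \<le> degree P" unfolding R_def by (rule card_poly_roots_bound[OF P0])
  also have "degree P \<le> N" unfolding P_def
    by (rule degree_diff_le) (auto intro: order.trans[OF degree_monom_le])
  finally have cR: "card R \<le> N" .
  have sub: "to_ac ` (UNIV - {0::'a}) \<subseteq> R"
  proof
    fix x assume "x \<in> to_ac ` (UNIV - {0::'a})"
    then obtain c :: 'a where c: "c \<noteq> 0" "x = to_ac c" by auto
    have "c ^ N = 1" using ff_pow_card_minus1[OF c(1)] by (simp add: N_def)
    hence "x ^ N = 1" using c(2) by (simp flip: to_ac_power)
    thus "x \<in> R" by (simp add: R_def polyP)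
  qed
  have "card (to_ac ` (UNIV - {0::'a})) = N"
  proof -
    have "card (to_ac ` (UNIV - {0::'a})) = card (UNIV - {0::'a})"
      by (rule card_image[OF inj_on_subset[OF inj_to_ac subset_UNIV]])
    thus ?thesis by (simp add: card_Diff_singleton N_def)
  qed
  hence "to_ac ` (UNIV - {0::'a}) = R"
    using card_subset_eq[OF finR sub] cR card_mono[OF finR sub] by simp
  moreover have "z \<in> R" using assms by (simp add: R_def polyP N_def)
  ultimately show ?thesis by auto
qed


theorem corollary3p2:
  fixes n :: nat
  assumes "n \<ge> 2"
    and "card (UNIV :: 'g::{finite,ab_group_add} set) = card (UNIV :: 'a::{finite,field} set) ^ (n + 1)"
    and "elementary_abelian TYPE('g)"
  shows "additive_under (pg_points n :: (nat \<Rightarrow> 'a) set set) (pg_hyperplanes n) TYPE('g)"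
proof -
  note n2 = assms(1)
  define q where "q = card (UNIV::'a set)"
  have q2: "q \<ge> 2" unfolding q_def by (rule ff_card_ge2)
  obtain p :: nat where p: "Factorial_Ring.prime p" and pg: "\<And>x::'g. (\<Sum>i<p. x) = 0"
    using assms(3) unfolding elementary_abelian_def by blast
  have mulg: "mulN p x = 0" for x :: 'g using pg by (simp add: mulN_def)
  have p1: "p > 1" using p prime_gt_1_nat by blast
  have "\<exists>bs. set bs \<subseteq> (UNIV::'g set) \<and> bij_betw (Lp bs) (Dset {..<p} (length bs)) UNIV"
    by (rule Fp_basis[OF p]) (auto simp: mulg)
  then obtain bsg :: "'g list" where bsg: "bij_betw (Lp bsg) (Dset {..<p} (length bsg)) UNIV" by blast
  define m where "m = length bsg"
  have cardg: "card (UNIV::'g set) = p ^ m"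
    using bij_betw_same_card[OF bsg] by (simp add: card_Dset m_def)
  obtain k where k: "k \<ge> 1" "q = CHAR('a) ^ k" using ff_card_CHAR_pow unfolding q_def by blast
  have "CHAR('a) dvd q" using k by (simp add: dvd_power)
  also have "q dvd q ^ (n + 1)" by simp
  also have "q ^ (n + 1) = p ^ m" using assms(2) cardg by (simp add: q_def)
  finally have "CHAR('a) dvd p ^ m" .
  hence "CHAR('a) dvd p" using ff_CHAR_prime prime_dvd_power by blast
  hence charp: "CHAR('a) = p" using ff_CHAR_prime p primes_dvd_imp_eq by blast
  define Q where "Q = q ^ (n + 1)"
  define K where "K = (Kset Q :: 'a alg_closure set)"
  have cardK: "card K = Q" unfolding K_def Q_def q_def by (rule card_K) simp
  have finK: "finite K" using cardK q2 by (intro card_ge_0_finite) (simp add: Q_def)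
  have K0: "0 \<in> K" using q2 by (simp add: K_def Q_def K_0)
  have Kadd: "x + y \<in> K" if "x \<in> K" "y \<in> K" for x y
    using that unfolding K_def Q_def q_def by (rule K_add)
  have Kmul: "x * y \<in> K" if "x \<in> K" "y \<in> K" for x y
    using that unfolding K_def by (rule K_mult)
  have Kac: "to_ac c \<in> K" for c :: 'a
    unfolding K_def Q_def q_def by (rule K_to_ac)
  have Kpow: "x ^ i \<in> K" if "x \<in> K" for x i
    using that unfolding K_def by (rule K_power)
  have mulE: "mulN p x = 0" for x :: "'a alg_closure"
  proof -
    have "of_nat p = (0::'a alg_closure)"
      using of_nat_CHAR[where 'a="'a alg_closure"] by (simp add: charp)
    thus ?thesis by (simp add: mulN_ring)
  qed
  have "\<exists>bs. set bs \<subseteq> K \<and> bij_betw (Lp bs) (Dset {..<p} (length bs)) K"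
    by (rule Fp_basis[OF p finK K0 Kadd mulE])
  then obtain bsK where bsKK: "set bsK \<subseteq> K" and bsK: "bij_betw (Lp bsK) (Dset {..<p} (length bsK)) K"
    by blast
  have "p ^ length bsK = card K"
    using bij_betw_same_card[OF bsK] by (simp add: card_Dset)
  also have "\<dots> = p ^ m" using cardK assms(2) cardg by (simp add: Q_def q_def)
  finally have lenK: "length bsK = m" using p1 by simp
  define D where "D = Dset {..<p} m"
  have bsK': "bij_betw (Lp bsK) D K" using bsK lenK by (simp add: D_def)
  have bsg': "bij_betw (Lp bsg) D UNIV" using bsg by (simp add: D_def m_def)
  define \<psi> where "\<psi> = (\<lambda>x. Lp bsg (inv_into D (Lp bsK) x))"
  have invD: "inv_into D (Lp bsK) x \<in> D" if "x \<in> K" for x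
    using that bsK' by (metis bij_betw_def inv_into_into)
  have invL: "Lp bsK (inv_into D (Lp bsK) x) = x" if "x \<in> K" for x
    using that bsK' by (metis bij_betw_def f_inv_into_f)
  have modD: "(\<lambda>i. if i < m then c i mod p else 0) \<in> D" for c
    using p1 by (auto simp: D_def Dset_def)
  have \<psi>add: "\<psi> (x + y) = \<psi> x + \<psi> y" if "x \<in> K" "y \<in> K" for x y
  proof -
    define cx where "cx = inv_into D (Lp bsK) x"
    define cy where "cy = inv_into D (Lp bsK) y"
    define s where "s = (\<lambda>i. if i < m then (cx i + cy i) mod p else 0)"
    have "x + y = Lp bsK cx + Lp bsK cy"
      using invL that by (simp add: cx_def cy_def)
    also have "\<dots> = Lp bsK (\<lambda>i. cx i + cy i)" by (rule Lp_add)
    also have "\<dots> = Lp bsK s"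
      unfolding s_def using Lp_mod[of bsK p "\<lambda>i. cx i + cy i"] mulE lenK by simp
    finally have xy: "x + y = Lp bsK s" .
    have "inv_into D (Lp bsK) (x + y) = s"
      unfolding xy using bsK' modD by (auto simp: s_def bij_betw_def intro!: inv_into_f_f)
    hence "\<psi> (x + y) = Lp bsg s" by (simp add: \<psi>_def)
    also have "\<dots> = Lp bsg (\<lambda>i. cx i + cy i)"
      unfolding s_def using Lp_mod[of bsg p "\<lambda>i. cx i + cy i"] mulg by (simp add: m_def)
    also have "\<dots> = \<psi> x + \<psi> y" by (simp add: \<psi>_def cx_def cy_def Lp_add)
    finally show ?thesis .
  qed
  have \<psi>0: "\<psi> 0 = 0"
  proof -
    have "\<psi> (0 + 0) = \<psi> 0 + \<psi> 0" by (rule \<psi>add[OF K0 K0])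
    thus ?thesis by simp
  qed
  have \<psi>sum: "\<psi> (\<Sum>i\<in>I. F i) = (\<Sum>i\<in>I. \<psi> (F i))" if "\<And>i. i \<in> I \<Longrightarrow> F i \<in> K" for I and F :: "'x \<Rightarrow> 'a alg_closure"
    using that
  proof (induction I rule: infinite_finite_induct)
    case (insert i I)
    have "F i \<in> K" using insert by simp
    moreover have "(\<Sum>i\<in>I. F i) \<in> K" using insert by (intro sum_closed[OF K0 Kadd]) auto
    ultimately show ?case using insert by (simp add: \<psi>add)
  qed (simp_all add: \<psi>0)
  have \<psi>inj: "inj_on \<psi> K"
  proof (rule inj_onI)
    fix x y assume xy: "x \<in> K" "y \<in> K" "\<psi> x = \<psi> y"
    have "inv_into D (Lp bsK) x = inv_into D (Lp bsK) y"
      using xy invD bsg' unfolding \<psi>_def bij_betw_def by (auto dest: inj_onD)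
    thus "x = y" using invL xy by metis
  qed
  have "\<exists>bs. set bs \<subseteq> K \<and> bij_betw (La bs) (Dset (UNIV::'a set) (length bs)) K"
    using Fa_basis[OF finK K0] Kadd Kmul Kac by blast
  then obtain bsa where bsa: "bij_betw (La bsa) (Dset (UNIV::'a set) (length bsa)) K" by blast
  have "q ^ length bsa = card K"
    using bij_betw_same_card[OF bsa] by (simp add: card_Dset q_def)
  also have "\<dots> = q ^ (n + 1)" by (simp add: cardK Q_def)
  finally have "q ^ length bsa = q ^ Suc n" by simp
  hence lena: "length bsa = Suc n" using q2 power_inject_exp[of q "length bsa" "Suc n"] by linarith
  define Lv where "Lv = La bsa"
  have Lvbij: "bij_betw Lv (pg_vecs n) K" using bsa lena by (simp add: Lv_def pg_vecs_Dset)
  have LvK: "Lv v \<in> K" if "v \<in> pg_vecs n" for v using Lvbij that by (auto simp: bij_betw_def)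
  have Lvinj: "Lv v = Lv w \<Longrightarrow> v \<in> pg_vecs n \<Longrightarrow> w \<in> pg_vecs n \<Longrightarrow> v = w" for v w
    using Lvbij by (auto simp: bij_betw_def dest: inj_onD)
  have zero_pg: "(\<lambda>i. 0::'a) \<in> pg_vecs n" by (simp add: pg_vecs_def)
  have scale_pg: "(\<lambda>i. c * v i) \<in> pg_vecs n" if "v \<in> pg_vecs n" for v and c :: 'a
    using that by (simp add: pg_vecs_def)
  have Lv0: "Lv v \<noteq> 0" if "v \<in> pg_vecs n" "v \<noteq> (\<lambda>i. 0)" for v
    using Lvinj[of v "\<lambda>i. 0"] that zero_pg by (auto simp: Lv_def La_zero)
  define rep where "rep = (\<lambda>P::(nat \<Rightarrow> 'a) set. SOME v. v \<in> pg_vecs n \<and> v \<noteq> (\<lambda>i. 0) \<and> P = span1 v)"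
  have rep: "rep P \<in> pg_vecs n \<and> rep P \<noteq> (\<lambda>i. 0) \<and> P = span1 (rep P)" if "P \<in> pg_points n" for P
  proof -
    have "\<exists>v. v \<in> pg_vecs n \<and> v \<noteq> (\<lambda>i. 0) \<and> P = span1 v" using that by (auto simp: pg_points_def)
    thus ?thesis unfolding rep_def by (rule someI_ex)
  qed
  define N where "N = q - 1"
  define f where "f = (\<lambda>P. \<psi> (Lv (rep P) ^ N))"
  have GK: "Lv (rep P) ^ N \<in> K" if "P \<in> pg_points n" for P
    using rep[OF that] by (intro Kpow LvK) auto
  have finj: "inj_on f (pg_points n)"
  proof (rule inj_onI)
    fix P P' assume P: "P \<in> pg_points n" and P': "P' \<in> pg_points n" and eq: "f P = f P'"
    define v where "v = rep P"
    define v' where "v' = rep P'"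
    have v: "v \<in> pg_vecs n" "v \<noteq> (\<lambda>i. 0)" "P = span1 v" using rep[OF P] by (auto simp: v_def)
    have v': "v' \<in> pg_vecs n" "v' \<noteq> (\<lambda>i. 0)" "P' = span1 v'" using rep[OF P'] by (auto simp: v'_def)
    have "Lv v ^ N = Lv v' ^ N"
      using eq \<psi>inj GK[OF P] GK[OF P'] by (auto simp: f_def v_def v'_def dest: inj_onD)
    hence "(Lv v' / Lv v) ^ N = 1" using Lv0[OF v(1,2)] Lv0[OF v'(1,2)] by (simp add: power_divide)
    then obtain c where c: "c \<noteq> 0" "Lv v' / Lv v = to_ac c"
      using roots_unity_in_base unfolding N_def q_def by blast
    have "Lv v' = to_ac c * Lv v" using c(2) Lv0[OF v(1,2)] by (simp add: field_simps)
    also have "\<dots> = Lv (\<lambda>i. c * v i)" by (simp add: Lv_def La_scale)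
    finally have "v' = (\<lambda>i. c * v i)" using Lvinj v'(1) scale_pg[OF v(1)] by blast
    thus "P = P'" using v(3) v'(3) span1_scale[OF c(1)] by simp
  qed
  have fsum: "(\<Sum>P\<in>B. f P) = 0" if B: "B \<in> pg_hyperplanes n" for B
  proof -
    obtain a where a: "a \<in> pg_vecs n" "a \<noteq> (\<lambda>i. 0)" and Bdef: "B = pg_hyperplane n a"
      using B by (auto simp: pg_hyperplanes_def)
    define W where "W = {v\<in>pg_vecs n. (\<Sum>i\<le>n. a i * v i) = 0}"
    have Bpts: "B \<subseteq> pg_points n" by (auto simp: Bdef pg_hyperplane_def)
    have finpts: "finite (pg_points n :: (nat \<Rightarrow> 'a) set set)"
      unfolding pg_points_def
      by (rule finite_subset[OF _ finite_imageI[OF finite_pg_vecs[of n], of span1]]) auto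
    have finB: "finite B" using finite_subset[OF Bpts finpts] .
    have inB: "(\<Sum>i\<le>n. a i * w i) = 0" if "P \<in> B" "w \<in> P" for P w
      using that by (auto simp: Bdef pg_hyperplane_def)
    have hyp: "(\<Sum>v\<in>W. Lv v ^ N) = 0"
      unfolding W_def Lv_def N_def q_def by (rule hyp_sum[OF n2 a])
    have N1: "N \<ge> 1" using q2 by (simp add: N_def)
    have "(\<Sum>v\<in>W. Lv v ^ N) = (\<Sum>v\<in>W - {\<lambda>i. 0}. Lv v ^ N)"
    proof (rule sum.mono_neutral_right)
      show "finite W" unfolding W_def by (rule finite_subset[OF _ finite_pg_vecs]) auto
      show "\<forall>v\<in>W - (W - {\<lambda>i. 0}). Lv v ^ N = 0"
        using N1 by (auto simp: Lv_def La_zero power_0_left)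
    qed auto
    also have "\<dots> = (\<Sum>(P, c)\<in>B \<times> (UNIV - {0::'a}). Lv (\<lambda>i. c * rep P i) ^ N)"
    proof -
      have bij: "bij_betw (\<lambda>(P, c). (\<lambda>i. c * rep P i)) (B \<times> (UNIV - {0::'a})) (W - {\<lambda>i. 0})"
      proof (rule bij_betw_imageI)
        show "inj_on (\<lambda>(P, c). (\<lambda>i. c * rep P i)) (B \<times> (UNIV - {0::'a}))"
        proof (rule inj_onI)
          fix x y assume x: "x \<in> B \<times> (UNIV - {0::'a})" and y: "y \<in> B \<times> (UNIV - {0::'a})"
            and eqxy: "(\<lambda>(P, c). (\<lambda>i. c * rep P i)) x = (\<lambda>(P, c). (\<lambda>i. c * rep P i)) y"
          obtain P c where xe: "x = (P, c)" by (cases x)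
          obtain P' c' where ye: "y = (P', c')" by (cases y)
          have P: "P \<in> B" and c: "c \<noteq> 0" using x xe by auto
          have P': "P' \<in> B" and c': "c' \<noteq> 0" using y ye by auto
          have eq: "(\<lambda>i. c * rep P i) = (\<lambda>i. c' * rep P' i)" using eqxy xe ye by simp
          have rP: "rep P \<in> pg_vecs n \<and> rep P \<noteq> (\<lambda>i. 0) \<and> P = span1 (rep P)" using rep P Bpts by blast
          have rP': "rep P' \<in> pg_vecs n \<and> rep P' \<noteq> (\<lambda>i. 0) \<and> P' = span1 (rep P')" using rep P' Bpts by blast
          have "P = span1 (\<lambda>i. c * rep P i)" using rP span1_scale[OF c] by simp
          also have "\<dots> = span1 (\<lambda>i. c' * rep P' i)" using eq by simp
          also have "\<dots> = P'" using rP' span1_scale[OF c'] by simp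
          finally have PP: "P = P'" .
          hence "(\<lambda>i. c * rep P i) = (\<lambda>i. c' * rep P i)" using eq by simp
          hence "c = c'" using rP by (intro nonzero_vec_scale[of "rep P"]) auto
          thus "x = y" using PP xe ye by simp
        qed
        show "(\<lambda>(P, c). (\<lambda>i. c * rep P i)) ` (B \<times> (UNIV - {0::'a})) = W - {\<lambda>i. 0}"
        proof
          show "(\<lambda>(P, c). (\<lambda>i. c * rep P i)) ` (B \<times> (UNIV - {0::'a})) \<subseteq> W - {\<lambda>i. 0}"
          proof (rule image_subsetI)
            fix x assume x: "x \<in> B \<times> (UNIV - {0::'a})"
            obtain P c where xe: "x = (P, c)" by (cases x)
            have P: "P \<in> B" and c: "c \<noteq> 0" using x xe by auto
            have rP: "rep P \<in> pg_vecs n \<and> rep P \<noteq> (\<lambda>i. 0) \<and> P = span1 (rep P)" using rep P Bpts by blast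
            have "rep P \<in> P" using rP span1_mem by metis
            hence s0: "(\<Sum>i\<le>n. a i * rep P i) = 0" using inB P by blast
            have "(\<Sum>i\<le>n. a i * (c * rep P i)) = c * (\<Sum>i\<le>n. a i * rep P i)"
              by (simp add: sum_distrib_left mult_ac)
            hence "(\<lambda>i. c * rep P i) \<in> W" using s0 scale_pg rP by (simp add: W_def)
            moreover have "(\<lambda>i. c * rep P i) \<noteq> (\<lambda>i. 0)"
            proof
              assume "(\<lambda>i. c * rep P i) = (\<lambda>i. 0)"
              hence "(\<lambda>i. c * rep P i) = (\<lambda>i. 0 * rep P i)" by simp
              hence "c = 0" using rP by (intro nonzero_vec_scale[of "rep P"]) auto
              thus False using c by simp
            qed
            ultimately show "(\<lambda>(P, c). (\<lambda>i. c * rep P i)) x \<in> W - {\<lambda>i. 0}" using xe by simp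
          qed
          show "W - {\<lambda>i. 0} \<subseteq> (\<lambda>(P, c). (\<lambda>i. c * rep P i)) ` (B \<times> (UNIV - {0::'a}))"
          proof
            fix w assume w: "w \<in> W - {\<lambda>i. 0}"
            define P where "P = span1 w"
            have wv: "w \<in> pg_vecs n" "w \<noteq> (\<lambda>i. 0)" and wa: "(\<Sum>i\<le>n. a i * w i) = 0"
              using w by (auto simp: W_def)
            have Ppt: "P \<in> pg_points n" using wv by (auto simp: pg_points_def P_def)
            have "\<forall>u\<in>P. (\<Sum>i\<le>n. a i * u i) = 0"
            proof
              fix u assume "u \<in> P"
              then obtain d where "u = (\<lambda>i. d * w i)" by (auto simp: P_def span1_iff)
              hence "(\<Sum>i\<le>n. a i * u i) = d * (\<Sum>i\<le>n. a i * w i)"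
                by (simp add: sum_distrib_left mult_ac)
              thus "(\<Sum>i\<le>n. a i * u i) = 0" using wa by simp
            qed
            hence PB: "P \<in> B" using Ppt by (simp add: Bdef pg_hyperplane_def)
            have rP: "rep P \<in> pg_vecs n \<and> rep P \<noteq> (\<lambda>i. 0) \<and> P = span1 (rep P)" using rep Ppt by blast
            have "w \<in> span1 (rep P)" using rP span1_mem[of w] by (simp add: P_def)
            then obtain c where c: "w = (\<lambda>i. c * rep P i)" by (auto simp: span1_iff)
            have "c \<noteq> 0" using c wv(2) by auto
            thus "w \<in> (\<lambda>(P, c). (\<lambda>i. c * rep P i)) ` (B \<times> (UNIV - {0::'a}))"
              using PB c by (auto intro!: image_eqI[of _ _ "(P, c)"])
          qed
        qed
      qed
      show ?thesis
        using sum.reindex_bij_betw[OF bij, of "\<lambda>v. Lv v ^ N"] by (simp add: case_prod_beta')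
    qed
    also have "\<dots> = (\<Sum>P\<in>B. \<Sum>c\<in>UNIV - {0::'a}. Lv (\<lambda>i. c * rep P i) ^ N)"
      by (rule sum.cartesian_product[symmetric])
    also have "\<dots> = (\<Sum>P\<in>B. of_nat N * Lv (rep P) ^ N)"
    proof (rule sum.cong[OF refl])
      fix P assume "P \<in> B"
      have "(\<Sum>c\<in>UNIV - {0::'a}. Lv (\<lambda>i. c * rep P i) ^ N) = (\<Sum>c\<in>UNIV - {0::'a}. Lv (rep P) ^ N)"
      proof (rule sum.cong[OF refl])
        fix c :: 'a assume "c \<in> UNIV - {0}"
        hence "c ^ N = 1" using ff_pow_card_minus1[of c] by (simp add: N_def q_def)
        hence "to_ac c ^ N = 1" by (simp flip: to_ac_power)
        thus "Lv (\<lambda>i. c * rep P i) ^ N = Lv (rep P) ^ N"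
          by (simp add: Lv_def La_scale power_mult_distrib)
      qed
      also have "\<dots> = of_nat N * Lv (rep P) ^ N"
        by (simp add: card_Diff_singleton N_def q_def)
      finally show "(\<Sum>c\<in>UNIV - {0::'a}. Lv (\<lambda>i. c * rep P i) ^ N) = of_nat N * Lv (rep P) ^ N" .
    qed
    also have "\<dots> = - (\<Sum>P\<in>B. Lv (rep P) ^ N)"
    proof -
      have "of_nat N = (-1 :: 'a alg_closure)"
      proof -
        have "of_nat q = (0::'a alg_closure)"
          using ff_of_nat_card[where 'a='a and 'b="'a alg_closure"] by (simp add: q_def)
        thus ?thesis using q2 by (simp add: N_def of_nat_diff)
      qed
      thus ?thesis by (simp add: sum_negf)
    qed
    finally have "(\<Sum>P\<in>B. Lv (rep P) ^ N) = 0" using hyp by simp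
    hence "\<psi> (\<Sum>P\<in>B. Lv (rep P) ^ N) = 0" using \<psi>0 by simp
    moreover have "\<psi> (\<Sum>P\<in>B. Lv (rep P) ^ N) = (\<Sum>P\<in>B. f P)"
      unfolding f_def using GK Bpts by (intro \<psi>sum) auto
    ultimately show ?thesis by simp
  qed
  show ?thesis
    unfolding additive_under_def using finj fsum by blast
qed

end
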